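(* Let $(M,\circ,\mathrm{OR})$ be a free $\mathbb{D}$-module of rank 3 with scalar product and orientation, and let $x,y\in M\setminus\epsilon M$ with $x\circ x=y\circ y=1$ and with linearly independent resultants $\pi(x),\pi(y)$. Then $\mathfrak{Du}(x\circ y)=0$ if and only if the axes of $x$ and $y$ intersect. (Consequently $x\circ y=0$ iff their axes intersect orthogonally.)
   Context: $\mathbb{D}=\{a+\epsilon b: a,b\in\mathbb{R}\}$, $\epsilon^2=0$, $\mathfrak{Re},\mathfrak{Du}$ real and dual parts. Scalar product: symmetric $\mathbb{D}$-bilinear $\circ:M\times M\to\mathbb{D}$ with $\mathfrak{Re}(x\circ x)\ge0$, equality iff $x\in\epsilon M$; orientation: one of the two classes of ordered bases under $\{b'_j=A_{jk}b_k\}\sim\{b_k\}$ iff $\det\mathfrak{Re}(A)>0$. $V=M/\epsilon M$, $\pi$ the quotient (resultant) map. $E$ is the set of real 3-dimensional subspaces $P\subset M$ with $\mathfrak{Du}(x\circ y)=0$ for $x,y\in P$ and $P\cap\epsilon M=\{0\}$, a Euclidean affine space over $V$ (with $B-A:=d^ke_k$ where $e^B_i=e^A_i+\epsilon\,\epsilon_{ijk}d^ke^A_j$, $\{e_i\}$ positive orthonormal in $V$, $e^P_i\in P$ its lift). For $u\in M$ with $u\circ u=1$, its axis is the line $\{P\in E: u\in P\}$ of $E$. *)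

theory Defs
  imports "HOL-Analysis.Analysis"
begin

datatype dual = Dual (dRe: real) (dDu: real)

lemma dual_eq_iff: "x = y \<longleftrightarrow> dRe x = dRe y \<and> dDu x = dDu y"
  by (cases x; cases y) auto

instantiation dual :: comm_ring_1
begin
definition "0 = Dual 0 0"
definition "1 = Dual 1 0"
definition "x + y = Dual (dRe x + dRe y) (dDu x + dDu y)"
definition "x - y = Dual (dRe x - dRe y) (dDu x - dDu y)"
definition "- x = Dual (- dRe x) (- dDu x)"
definition "x * y = Dual (dRe x * dRe y) (dRe x * dDu y + dDu x * dRe y)"
instance
  by standard (auto simp: dual_eq_iff zero_dual_def one_dual_def plus_dual_def
      minus_dual_def uminus_dual_def times_dual_def algebra_simps)
end

definition eps :: dual where "eps = Dual 0 1"

definition dbasis3 :: "(dual \<Rightarrow> 'm::ab_group_add \<Rightarrow> 'm) \<Rightarrow> 'm^3 \<Rightarrow> bool" where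
  "dbasis3 sc b \<longleftrightarrow> (\<forall>x. \<exists>!c::dual^3. x = (\<Sum>k\<in>UNIV. sc (c$k) (b$k)))"

definition free_rank3 :: "(dual \<Rightarrow> 'm::ab_group_add \<Rightarrow> 'm) \<Rightarrow> bool" where
  "free_rank3 sc \<longleftrightarrow> module sc \<and> (\<exists>b. dbasis3 sc b)"

definition epsM :: "(dual \<Rightarrow> 'm::ab_group_add \<Rightarrow> 'm) \<Rightarrow> 'm set" where
  "epsM sc = range (sc eps)"

definition scalar_product :: "(dual \<Rightarrow> 'm::ab_group_add \<Rightarrow> 'm) \<Rightarrow> ('m \<Rightarrow> 'm \<Rightarrow> dual) \<Rightarrow> bool" where
  "scalar_product sc circ \<longleftrightarrow>
     (\<forall>x y. circ x y = circ y x) \<and>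
     (\<forall>a x y z. circ (sc a x + y) z = a * circ x z + circ y z) \<and>
     (\<forall>x. dRe (circ x x) \<ge> 0) \<and>
     (\<forall>x. dRe (circ x x) = 0 \<longleftrightarrow> x \<in> epsM sc)"

definition same_orientation :: "(dual \<Rightarrow> 'm::ab_group_add \<Rightarrow> 'm) \<Rightarrow> 'm^3 \<Rightarrow> 'm^3 \<Rightarrow> bool" where
  "same_orientation sc b' b \<longleftrightarrow>
     (\<exists>A::dual^3^3. (\<forall>j. b'$j = (\<Sum>k\<in>UNIV. sc (A$j$k) (b$k))) \<and>
                   det (\<chi> j k. dRe (A$j$k)) > 0)"

definition orientation :: "(dual \<Rightarrow> 'm::ab_group_add \<Rightarrow> 'm) \<Rightarrow> ('m^3) set \<Rightarrow> bool" where
  "orientation sc OR \<longleftrightarrow>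
     (\<exists>b. dbasis3 sc b \<and> OR = {b'. dbasis3 sc b' \<and> same_orientation sc b' b})"

definition rscale :: "(dual \<Rightarrow> 'm::ab_group_add \<Rightarrow> 'm) \<Rightarrow> real \<Rightarrow> 'm \<Rightarrow> 'm" where
  "rscale sc r x = sc (Dual r 0) x"

text \<open>pi(x), pi(y) linearly independent in V = M / eps M (over R = D / eps D):
  a pi(x) + b pi(y) = 0, i.e. a x + b y in eps M, forces a = b = 0.\<close>
definition resultants_indep :: "(dual \<Rightarrow> 'm::ab_group_add \<Rightarrow> 'm) \<Rightarrow> 'm \<Rightarrow> 'm \<Rightarrow> bool" where
  "resultants_indep sc x y \<longleftrightarrow>
     (\<forall>a b::real. rscale sc a x + rscale sc b y \<in> epsM sc \<longrightarrow> a = 0 \<and> b = 0)"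

definition real_subspace3 :: "(dual \<Rightarrow> 'm::ab_group_add \<Rightarrow> 'm) \<Rightarrow> 'm set \<Rightarrow> bool" where
  "real_subspace3 sc P \<longleftrightarrow>
     (\<exists>p::'m^3.
        P = {u. \<exists>r::real^3. u = (\<Sum>k\<in>UNIV. rscale sc (r$k) (p$k))} \<and>
        (\<forall>r::real^3. (\<Sum>k\<in>UNIV. rscale sc (r$k) (p$k)) = 0 \<longrightarrow> r = 0))"

definition Espace :: "(dual \<Rightarrow> 'm::ab_group_add \<Rightarrow> 'm) \<Rightarrow> ('m \<Rightarrow> 'm \<Rightarrow> dual) \<Rightarrow> 'm set set" where
  "Espace sc circ =
     {P. real_subspace3 sc P \<and> (\<forall>u\<in>P. \<forall>v\<in>P. dDu (circ u v) = 0) \<and> P \<inter> epsM sc = {0}}"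

definition axis :: "(dual \<Rightarrow> 'm::ab_group_add \<Rightarrow> 'm) \<Rightarrow> ('m \<Rightarrow> 'm \<Rightarrow> dual) \<Rightarrow> 'm \<Rightarrow> 'm set set" where
  "axis sc circ u = {P \<in> Espace sc circ. u \<in> P}"

end

theory Submission
  imports Defs
begin

lemma dual_simps[simp]:
  "dRe 0 = 0" "dDu 0 = 0" "dRe 1 = 1" "dDu 1 = 0"
  "dRe (a + b) = dRe a + dRe b" "dDu (a + b) = dDu a + dDu b"
  "dRe (a - b) = dRe a - dRe b" "dDu (a - b) = dDu a - dDu b"
  "dRe (- a) = - dRe a" "dDu (- a) = - dDu a"
  "dRe (a * b) = dRe a * dRe b" "dDu (a * b) = dRe a * dDu b + dDu a * dRe b"
  "dRe eps = 0" "dDu eps = 1"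
  by (simp_all add: zero_dual_def one_dual_def plus_dual_def minus_dual_def
      uminus_dual_def times_dual_def eps_def)

lemma dRe_sum: "dRe (sum f A) = (\<Sum>a\<in>A. dRe (f a))"
  by (induct A rule: infinite_finite_induct) auto

lemma Dual10[simp]: "Dual 1 0 = 1" and Dual00[simp]: "Dual 0 0 = 0"
  by (simp_all add: one_dual_def zero_dual_def)

lemma re0_eps: "dRe a = 0 \<Longrightarrow> a = eps * Dual (dDu a) 0"
  by (simp add: dual_eq_iff)

lemma ex_orth2:
  fixes U W :: "real^3"
  obtains r where "r \<noteq> 0" "r \<bullet> U = 0" "r \<bullet> W = 0"
proof -
  have "dim {U, W} \<le> card {U, W}" by (rule dim_le_card') simp
  also have "\<dots> \<le> 2" by (simp add: card_insert_le_m1)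
  finally have "dim {U, W} < DIM(real^3)" by simp
  then obtain r where r0: "r \<noteq> 0" and ro: "\<And>v. v \<in> span {U, W} \<Longrightarrow> orthogonal r v"
    using orthogonal_to_subspace_exists by blast
  show ?thesis
    using that[OF r0] ro[of U] ro[of W] span_base[of U "{U,W}"] span_base[of W "{U,W}"]
    by (simp add: orthogonal_def)
qed

locale DM = module sc for sc :: "dual \<Rightarrow> 'm::ab_group_add \<Rightarrow> 'm" +
  fixes circ :: "'m \<Rightarrow> 'm \<Rightarrow> dual"
  assumes sym: "circ x y = circ y x"
    and lin: "circ (sc a x + y) z = a * circ x z + circ y z"
    and pos: "dRe (circ x x) \<ge> 0"
    and zer: "dRe (circ x x) = 0 \<longleftrightarrow> x \<in> epsM sc"
begin

lemma c0[simp]: "circ 0 z = 0"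
proof -
  have "circ (sc 1 0 + 0) z = 1 * circ 0 z + circ 0 z" by (rule lin)
  then show ?thesis by simp
qed

lemma cscale[simp]: "circ (sc a x) z = a * circ x z"
  using lin[of a x 0 z] by simp

lemma cadd[simp]: "circ (x + y) z = circ x z + circ y z"
  using lin[of 1 x y z] by simp

lemma cminus[simp]: "circ (- x) z = - circ x z"
  using cscale[of "-1" x z] by simp

lemma cdiff[simp]: "circ (x - y) z = circ x z - circ y z"
  using cadd[of x "- y" z] by simp

lemma c0r[simp]: "circ z 0 = 0" by (subst sym) simp
lemma cscaler[simp]: "circ z (sc a x) = a * circ z x" by (subst (1 2) sym) simp
lemma caddr[simp]: "circ z (x + y) = circ z x + circ z y" by (subst (1 2 3) sym) simp
lemma cdiffr[simp]: "circ z (x - y) = circ z x - circ z y" by (subst (1 2 3) sym) simp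

lemma csum: "circ (sum f A) z = (\<Sum>a\<in>A. circ (f a) z)"
  by (induct A rule: infinite_finite_induct) auto

lemma eps_mem: "sc eps w \<in> epsM sc" by (simp add: epsM_def)

lemma eps_add: "u \<in> epsM sc \<Longrightarrow> v \<in> epsM sc \<Longrightarrow> u + v \<in> epsM sc"
  by (auto simp: epsM_def scale_right_distrib[symmetric])

lemma eps_scale: "u \<in> epsM sc \<Longrightarrow> sc a u \<in> epsM sc"
proof -
  assume "u \<in> epsM sc"
  then obtain w where "u = sc eps w" by (auto simp: epsM_def)
  then have "sc a u = sc eps (sc a w)" by (simp add: mult.commute)
  then show ?thesis unfolding epsM_def by (metis rangeI)
qed

lemma eps_zero: "0 \<in> epsM sc"
  using eps_mem[of 0] by simp

lemma eps_sum: "(\<And>a. a \<in> A \<Longrightarrow> f a \<in> epsM sc) \<Longrightarrow> sum f A \<in> epsM sc"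
  by (induct A rule: infinite_finite_induct) (auto simp: eps_zero eps_add)

lemma eps_re: "u \<in> epsM sc \<Longrightarrow> dRe (circ u v) = 0"
  by (auto simp: epsM_def)

lemma re0_mem: "dRe a = 0 \<Longrightarrow> sc a u \<in> epsM sc"
  by (subst re0_eps, assumption) (metis eps_mem scale_scale mult.commute eps_scale)

lemma gram3:
  assumes o12: "circ p1 p2 = 0" and o13: "circ p1 p3 = 0" and o23: "circ p2 p3 = 0"
    and n1: "circ p1 p1 = Dual c1 0" and n2: "circ p2 p2 = Dual c2 0" and n3: "circ p3 p3 = Dual c3 0"
  shows "circ (sc (Dual a1 0) p1 + sc (Dual a2 0) p2 + sc (Dual a3 0) p3)
              (sc (Dual b1 0) p1 + sc (Dual b2 0) p2 + sc (Dual b3 0) p3)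
         = Dual (a1*b1*c1 + a2*b2*c2 + a3*b3*c3) 0"
proof -
  have o21: "circ p2 p1 = 0" and o31: "circ p3 p1 = 0" and o32: "circ p3 p2 = 0"
    using o12 o13 o23 sym by metis+
  show ?thesis
    by (simp add: o12 o13 o23 o21 o31 o32 n1 n2 n3 dual_eq_iff)
qed

lemma main:
  assumes basis: "\<forall>w. \<exists>!c::dual^3. w = (\<Sum>k\<in>UNIV. sc (c$k) (b$k))"
    and xx: "circ x x = 1" and yy: "circ y y = 1"
    and ind: "resultants_indep sc x y" and du: "dDu (circ x y) = 0"
  shows "\<exists>P\<in>Espace sc circ. x \<in> P \<and> y \<in> P"
proof -
  define t where "t = dRe (circ x y)"
  have hxy: "circ x y = Dual t 0" using du by (simp add: t_def dual_eq_iff)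
  have hyx: "circ y x = Dual t 0" using hxy sym by metis
  define y' where "y' = y - sc (Dual t 0) x"
  have xy': "circ x y' = 0" by (simp add: y'_def hxy xx)
  have y'x: "circ y' x = 0" using xy' sym by metis
  have yy': "circ y' y' = Dual (1 - t*t) 0"
    by (simp add: y'_def hxy hyx xx yy dual_eq_iff)
  have y'ne: "y' \<notin> epsM sc"
  proof
    assume "y' \<in> epsM sc"
    moreover have "y' = rscale sc (-t) x + rscale sc 1 y"
    proof -
      have "Dual (-t) 0 = - Dual t 0" by (simp add: dual_eq_iff)
      then show ?thesis by (simp add: rscale_def y'_def)
    qed
    ultimately show False using ind unfolding resultants_indep_def by fastforce
  qed
  define c0 where "c0 = 1 - t*t"
  have c0pos: "c0 > 0"
    using pos[of y'] zer[of y'] y'ne yy' by (simp add: c0_def)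
  define zk where "zk k = b$k - sc (circ x (b$k)) x - sc (Dual (1/c0) 0 * circ y' (b$k)) y'" for k
  have xzk: "circ x (zk k) = 0" for k by (simp add: zk_def xx xy')
  have yzk: "circ y' (zk k) = 0" for k
  proof -
    have "Dual (1/c0) 0 * circ y' (b$k) * Dual c0 0 = circ y' (b$k)"
      using c0pos by (simp add: dual_eq_iff)
    then show ?thesis by (simp add: zk_def y'x yy' c0_def[symmetric] mult.assoc)
  qed
  have "\<exists>k. zk k \<notin> epsM sc"
  proof (rule ccontr)
    assume "\<not> ?thesis"
    then have allz: "zk k \<in> epsM sc" for k by blast
    define U where "U = (\<chi> k. dRe (circ x (b$k)))"
    define W where "W = (\<chi> k. dRe (circ y' (b$k)))"
    obtain r where r0: "r \<noteq> 0" and ro1: "r \<bullet> U = 0" and ro2: "r \<bullet> W = 0"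
      by (rule ex_orth2)
    have rU: "(\<Sum>k\<in>UNIV. r$k * dRe (circ x (b$k))) = 0"
      using ro1 by (simp add: inner_vec_def U_def)
    have rW: "(\<Sum>k\<in>UNIV. r$k * dRe (circ y' (b$k))) = 0"
      using ro2 by (simp add: inner_vec_def W_def)
    define m where "m = (\<Sum>k\<in>UNIV. sc (Dual (r$k) 0) (b$k))"
    define A where "A = (\<Sum>k\<in>UNIV. Dual (r$k) 0 * circ x (b$k))"
    define B where "B = (\<Sum>k\<in>UNIV. Dual (r$k) 0 * (Dual (1/c0) 0 * circ y' (b$k)))"
    have ident: "m = (\<Sum>k\<in>UNIV. sc (Dual (r$k) 0) (zk k)) + sc A x + sc B y'"
    proof -
      have "(\<Sum>k\<in>UNIV. sc (Dual (r$k) 0) (zk k)) =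
        m - (\<Sum>k\<in>UNIV. sc (Dual (r$k) 0 * circ x (b$k)) x)
          - (\<Sum>k\<in>UNIV. sc (Dual (r$k) 0 * (Dual (1/c0) 0 * circ y' (b$k))) y')"
        by (simp add: zk_def m_def scale_right_diff_distrib sum_subtractf)
      also have "\<dots> = m - sc A x - sc B y'"
        by (simp add: A_def B_def scale_sum_left)
      finally show ?thesis by (simp add: algebra_simps)
    qed
    have "dRe A = 0" using rU by (simp add: A_def dRe_sum)
    moreover have "dRe B = (1/c0) * (\<Sum>k\<in>UNIV. r$k * dRe (circ y' (b$k)))"
      by (simp add: B_def dRe_sum sum_distrib_left algebra_simps)
    then have "dRe B = 0" using rW by simp
    ultimately have "m \<in> epsM sc"
      unfolding ident
      by (intro eps_add eps_sum eps_scale allz re0_mem)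
    then obtain w where mw: "m = sc eps w" by (auto simp: epsM_def)
    obtain c where wc: "w = (\<Sum>k\<in>UNIV. sc (c$k) (b$k))" using basis by blast
    have m2: "m = (\<Sum>k\<in>UNIV. sc ((\<chi> k. eps * c$k)$k) (b$k))"
      by (simp add: mw wc scale_sum_right)
    have m1: "m = (\<Sum>k\<in>UNIV. sc ((\<chi> k. Dual (r$k) 0)$k) (b$k))"
      by (simp add: m_def)
    have "(\<chi> k. eps * c$k) = (\<chi> k. Dual (r$k) 0)"
      using basis m1 m2 by blast
    then have "\<And>k. Dual (r$k) 0 = eps * c$k" by (metis vec_lambda_beta)
    then have "\<And>k. r$k = 0" by (metis dual.sel(1) dual_simps(11) dual_simps(13) mult_zero_left)
    then have "r = 0" by (simp add: vec_eq_iff)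
    then show False using r0 by simp
  qed
  then obtain k where z0ne: "zk k \<notin> epsM sc" by blast
  define z0 where "z0 = zk k"
  define \<rho> where "\<rho> = dRe (circ z0 z0)"
  define \<sigma> where "\<sigma> = dDu (circ z0 z0)"
  have rpos: "\<rho> > 0" using pos[of z0] zer[of z0] z0ne by (simp add: \<rho>_def z0_def)
  define z where "z = sc (Dual 1 (-\<sigma>/(2*\<rho>))) z0"
  have zz: "circ z z = Dual \<rho> 0"
  proof -
    have "circ z0 z0 = Dual \<rho> \<sigma>" by (simp add: \<rho>_def \<sigma>_def dual_eq_iff)
    then show ?thesis using rpos by (simp add: z_def dual_eq_iff field_simps)
  qed
  have xz: "circ x z = 0" by (simp add: z_def z0_def xzk)
  have yz: "circ y' z = 0" by (simp add: z_def z0_def yzk)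
  define p :: "'m^3" where "p = vector [x, y', z]"
  define G where "G r = sc (Dual (r$1) 0) x + sc (Dual (r$2) 0) y' + sc (Dual (r$3) 0) z" for r :: "real^3"
  have Gsum: "(\<Sum>k\<in>UNIV. rscale sc (r$k) (p$k)) = G r" for r
    by (simp add: sum_3 rscale_def p_def G_def)
  have Ggram: "circ (G r) (G q) = Dual (r$1 * q$1 * 1 + r$2 * q$2 * c0 + r$3 * q$3 * \<rho>) 0" for r q
    unfolding G_def
    by (rule gram3) (simp_all add: xy' xz yz xx yy' zz c0_def)
  have Geps: "G r \<in> epsM sc \<Longrightarrow> r = 0" for r
  proof -
    assume "G r \<in> epsM sc"
    then have "dRe (circ (G r) (G r)) = 0" by (rule eps_re)
    then have e: "(r$1)^2 + c0 * (r$2)^2 + \<rho> * (r$3)^2 = 0"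
      by (simp add: Ggram power2_eq_square algebra_simps)
    have "0 \<le> c0 * (r$2)^2" "0 \<le> \<rho> * (r$3)^2" using c0pos rpos by simp_all
    then have "(r$1)^2 = 0" "c0 * (r$2)^2 = 0" "\<rho> * (r$3)^2 = 0" using e
      by (smt (verit) zero_le_power2)+
    then have "r$1 = 0" "r$2 = 0" "r$3 = 0" using c0pos rpos by simp_all
    then show "r = 0" by (simp add: vec_eq_iff forall_3)
  qed
  define P where "P = {u. \<exists>r::real^3. u = (\<Sum>k\<in>UNIV. rscale sc (r$k) (p$k))}"
  have PG: "P = range G" by (auto simp: P_def Gsum)
  have G0: "G 0 = 0" by (simp add: G_def)
  have "real_subspace3 sc P"
    unfolding real_subspace3_def
  proof (intro exI conjI allI impI)
    show "P = {u. \<exists>r::real^3. u = (\<Sum>k\<in>UNIV. rscale sc (r$k) (p$k))}" by (rule P_def)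
    fix r :: "real^3"
    assume "(\<Sum>k\<in>UNIV. rscale sc (r$k) (p$k)) = 0"
    then have "G r = 0" by (simp add: Gsum)
    then show "r = 0" using Geps eps_zero by metis
  qed
  moreover have "\<forall>u\<in>P. \<forall>v\<in>P. dDu (circ u v) = 0" by (auto simp: PG Ggram)
  moreover have "P \<inter> epsM sc = {0}"
  proof
    show "P \<inter> epsM sc \<subseteq> {0}" using Geps G0 by (auto simp: PG)
    show "{0} \<subseteq> P \<inter> epsM sc" using G0 eps_zero by (auto simp: PG intro: range_eqI[of _ _ 0])
  qed
  ultimately have PE: "P \<in> Espace sc circ" by (simp add: Espace_def)
  have "G (vector [1, 0, 0]) = x" by (simp add: G_def)
  then have "x \<in> P" by (metis PG rangeI)
  moreover have "G (vector [t, 1, 0]) = y" by (simp add: G_def y'_def)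
  then have "y \<in> P" by (metis PG rangeI)
  ultimately show ?thesis using PE by blast
qed

end

theorem proposition12:
  fixes sc :: "dual \<Rightarrow> 'm::ab_group_add \<Rightarrow> 'm"
    and circ :: "'m \<Rightarrow> 'm \<Rightarrow> dual"
    and OR :: "('m^3) set"
    and x y :: 'm
  assumes "free_rank3 sc"
    and "scalar_product sc circ"
    and "orientation sc OR"
    and "x \<notin> epsM sc" and "y \<notin> epsM sc"
    and "circ x x = 1" and "circ y y = 1"
    and "resultants_indep sc x y"
  shows "dDu (circ x y) = 0 \<longleftrightarrow> axis sc circ x \<inter> axis sc circ y \<noteq> {}"
proof -
  obtain b where md: "module sc" and bas: "dbasis3 sc b"
    using assms(1) by (auto simp: free_rank3_def)
  interpret DM sc circ
    using md assms(2) by (auto simp: DM_def DM_axioms_def scalar_product_def)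
  show ?thesis
  proof
    assume "dDu (circ x y) = 0"
    then obtain P where "P \<in> Espace sc circ" "x \<in> P" "y \<in> P"
      using main[of b x y] bas assms(6,7,8) by (auto simp: dbasis3_def)
    then show "axis sc circ x \<inter> axis sc circ y \<noteq> {}" by (auto simp: axis_def)
  next
    assume "axis sc circ x \<inter> axis sc circ y \<noteq> {}"
    then obtain P where "P \<in> Espace sc circ" "x \<in> P" "y \<in> P" by (auto simp: axis_def)
    then show "dDu (circ x y) = 0" by (auto simp: Espace_def)
  qed
qed

end
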